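(* Let $(X,\tau)$ be a topological space where $X$ is an uncountable set. If $\tau\subseteq\mathcal{C}(X)$, where $\mathcal{C}(X)=\{A\subseteq X: A\text{ is countable or } X\setminus A \text{ is countable}\}$, then every discrete subset of $X$ (discrete in the subspace topology) is countable. *)

theory Defs
  imports "HOL-Analysis.Analysis"
begin

definition cocountable_sets :: "'a set \<Rightarrow> 'a set set" where
  "cocountable_sets X = {A. A \<subseteq> X \<and> (countable A \<or> countable (X - A))}"

end

theory Submission
  imports Defs
begin

context includes cardinal_syntax
begin

lemma split_uncountable:
  assumes "uncountable (D::'a set)"
  obtains S1 S2 where "S1 \<subseteq> D" "S2 \<subseteq> D" "S1 \<inter> S2 = {}" "uncountable S1" "uncountable S2"
proof -
  have inf: "\<not> finite D" using assms countable_finite by blast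
  have "|D <+> D| =o |D|" by (rule card_of_Plus_infinite1[OF inf ordLeq_refl[OF card_of_Card_order]])
  then obtain f where f: "bij_betw f (D <+> D) D" using card_of_ordIso by blast
  have inj: "inj_on f (D <+> D)" using f bij_betw_def by blast
  define S1 where "S1 = f ` (Inl ` D)"
  define S2 where "S2 = f ` (Inr ` D)"
  have i1: "inj_on (f \<circ> Inl) D" using inj by (auto simp: inj_on_def)
  have i2: "inj_on (f \<circ> Inr) D" using inj by (auto simp: inj_on_def)
  have "S1 \<subseteq> D" "S2 \<subseteq> D" using f by (auto simp: S1_def S2_def bij_betw_def)
  moreover have "S1 \<inter> S2 = {}" using inj by (auto simp: S1_def S2_def inj_on_def)
  moreover have "uncountable S1"
  proof
    assume "countable S1"
    hence "countable ((f \<circ> Inl) ` D)" unfolding S1_def image_comp .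
    hence "countable D" using countable_image_inj_on[OF _ i1] by blast
    thus False using assms by simp
  qed
  moreover have "uncountable S2"
  proof
    assume "countable S2"
    hence "countable ((f \<circ> Inr) ` D)" unfolding S2_def image_comp .
    hence "countable D" using countable_image_inj_on[OF _ i2] by blast
    thus False using assms by simp
  qed
  ultimately show ?thesis by (rule that)
qed

end

theorem lemma3p7:
  fixes T :: "'a topology" and X :: "'a set"
  assumes "topspace T = X"
    and "uncountable X"
    and "{U. openin T U} \<subseteq> cocountable_sets X"
  shows "\<forall>D. D \<subseteq> X \<and> subtopology T D = discrete_topology D \<longrightarrow> countable D"
proof (intro allI impI)
  fix D assume D: "D \<subseteq> X \<and> subtopology T D = discrete_topology D"
  have DX: "D \<subseteq> X" using D by (rule conjunct1)
  have Dd: "subtopology T D = discrete_topology D" using D by (rule conjunct2)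
  show "countable D"
  proof (rule ccontr)
    assume "uncountable D"
    then obtain S1 S2 where s: "S1 \<subseteq> D" "S2 \<subseteq> D" "S1 \<inter> S2 = {}" "uncountable S1" "uncountable S2"
      by (rule split_uncountable)
    have "openin (subtopology T D) S1" unfolding Dd openin_discrete_topology by (rule s(1))
    then obtain U where U: "openin T U" "S1 = U \<inter> D" unfolding openin_subtopology by blast
    have "U \<in> cocountable_sets X" using U(1) assms(3) by blast
    hence "countable U \<or> countable (X - U)" by (simp add: cocountable_sets_def)
    moreover have "S1 \<subseteq> U" using U(2) by blast
    moreover have "S2 \<subseteq> X - U"
    proof
      fix x assume x: "x \<in> S2"
      have "x \<in> X" using x s(2) DX by blast
      moreover have "x \<notin> U"
      proof
        assume "x \<in> U"
        hence "x \<in> S1" using U(2) x s(2) by blast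
        thus False using x s(3) by blast
      qed
      ultimately show "x \<in> X - U" by blast
    qed
    ultimately show False
    proof (elim disjE)
      assume "countable U" "S1 \<subseteq> U" "S2 \<subseteq> X - U"
      hence "countable S1" using countable_subset by blast
      thus False using s(4) by contradiction
    next
      assume "countable (X - U)" "S1 \<subseteq> U" "S2 \<subseteq> X - U"
      hence "countable S2" using countable_subset by blast
      thus False using s(5) by contradiction
    qed
  qed
qed

end
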